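(* Let $F$ be an infinite field, let $V$ and $W$ be vector spaces over $F$, and let $n$ and $m_1,\dots,m_n$ be positive integers. Suppose that $m_i$-linear maps $f_i:V^{m_i}\to W$ ($i=1,\dots,n$) are such that for each $x\in V$ at least one of the elements $f_1(x,\dots,x),\dots,f_n(x,\dots,x)$ is $0$. Then there exists $i\in\{1,\dots,n\}$ such that $f_i(x,\dots,x)=0$ for every $x\in V$. *)

theory Defs
  imports Complex_Main
begin

text \<open>An m-linear map V^m \<rightarrow> W is represented as a function on lists of vectors;
  only its values on lists of length m matter.\<close>

definition multilinear ::
  "('f::field \<Rightarrow> 'v::ab_group_add \<Rightarrow> 'v) \<Rightarrow> ('f \<Rightarrow> 'w::ab_group_add \<Rightarrow> 'w)
     \<Rightarrow> nat \<Rightarrow> ('v list \<Rightarrow> 'w) \<Rightarrow> bool" where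
  "multilinear sV sW m f \<longleftrightarrow>
     (\<forall>xs. length xs = m \<longrightarrow>
        (\<forall>i<m. Vector_Spaces.linear sV sW (\<lambda>y. f (xs[i := y]))))"

definition diag :: "nat \<Rightarrow> ('v list \<Rightarrow> 'w) \<Rightarrow> 'v \<Rightarrow> 'w" where
  "diag m f x = f (replicate m x)"

end

theory Submission
  imports Defs "HOL-Computational_Algebra.Polynomial"
begin

definition linfun :: "('f::field \<Rightarrow> 'w::ab_group_add \<Rightarrow> 'w) \<Rightarrow> ('w \<Rightarrow> 'f) \<Rightarrow> bool" where
  "linfun sW phi \<longleftrightarrow> (\<forall>x y. phi (x + y) = phi x + phi y) \<and> (\<forall>c x. phi (sW c x) = c * phi x)"

definition polyish :: "('f::field \<Rightarrow> 'w::ab_group_add \<Rightarrow> 'w) \<Rightarrow> ('f \<Rightarrow> 'w) \<Rightarrow> bool" where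
  "polyish sW h \<longleftrightarrow> (\<forall>phi. linfun sW phi \<longrightarrow> (\<exists>p. \<forall>t. phi (h t) = poly p t))"

lemma polyish_const: "polyish sW (\<lambda>t. c)"
  unfolding polyish_def
proof (intro allI impI)
  fix phi :: "'b \<Rightarrow> 'a"
  show "\<exists>p. \<forall>t. phi c = poly p t" by (rule exI[of _ "[:phi c:]"]) simp
qed

lemma polyish_add: "polyish sW g \<Longrightarrow> polyish sW h \<Longrightarrow> polyish sW (\<lambda>t. g t + h t)"
  unfolding polyish_def linfun_def
  by (metis poly_add)

lemma polyish_scale: "polyish sW g \<Longrightarrow> polyish sW (\<lambda>t. sW t (g t))"
  unfolding polyish_def linfun_def
proof (intro allI impI)
  fix phi :: "'b \<Rightarrow> 'a"
  assume H: "\<forall>phi. (\<forall>x y. phi (x + y) = phi x + phi y) \<and> (\<forall>c x. phi (sW c x) = c * phi x) \<longrightarrow> (\<exists>p. \<forall>t. phi (g t) = poly p t)"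
    and L: "(\<forall>x y. phi (x + y) = phi x + phi y) \<and> (\<forall>c x. phi (sW c x) = c * phi x)"
  then obtain p where p: "\<forall>t. phi (g t) = poly p t" by blast
  show "\<exists>q. \<forall>t. phi (sW t (g t)) = poly q t"
    by (rule exI[of _ "[:0,1:] * p"]) (simp add: L p)
qed

lemma exists_linfun:
  assumes vs: "vector_space sW" and w: "w \<noteq> 0"
  shows "\<exists>phi. linfun sW phi \<and> phi w \<noteq> 0"
proof -
  interpret vector_space sW by fact
  have ind: "independent {w}"
    using w by (intro independent_insertI) (auto simp: span_empty independent_empty)
  define B where "B = extend_basis {w}"
  have iB: "independent B" unfolding B_def by (rule independent_extend_basis[OF ind])
  have sB: "span B = UNIV" unfolding B_def by (rule span_extend_basis[OF ind])
  have wB: "w \<in> B" unfolding B_def using extend_basis_superset[OF ind] by auto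
  define phi where "phi v = representation B v w" for v
  have "linfun sW phi"
    unfolding linfun_def phi_def
    using representation_add[OF iB] representation_scale[OF iB] sB by auto
  moreover have "phi w \<noteq> 0"
    unfolding phi_def using representation_basis[OF iB wB] by simp
  ultimately show ?thesis by blast
qed

definition Lst :: "('f \<Rightarrow> 'v \<Rightarrow> 'v) \<Rightarrow> nat \<Rightarrow> nat \<Rightarrow> 'f \<Rightarrow> 'v::ab_group_add list \<Rightarrow> 'v list \<Rightarrow> 'v list" where
  "Lst sV m j t xs ys = map (\<lambda>i. if i < j then xs!i + sV t (ys!i) else xs!i) [0..<m]"

lemma Lst_expand:
  assumes ml: "multilinear sV sW m f" and ly: "length ys = m"
  shows "j \<le> m \<Longrightarrow> length xs = m \<Longrightarrow> polyish sW (\<lambda>t. f (Lst sV m j t xs ys))"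
proof (induction j arbitrary: xs)
  case 0
  have "Lst sV m 0 t xs ys = xs" for t
    using 0 by (simp add: Lst_def list_eq_iff_nth_eq)
  then show ?case using polyish_const[of sW "f xs"] by simp
next
  case (Suc j)
  have jm: "j < m" using Suc by simp
  have a: "Lst sV m (Suc j) t xs ys = (Lst sV m j t xs ys)[j := xs!j + sV t (ys!j)]" for t
    using Suc.prems by (auto simp: Lst_def list_eq_iff_nth_eq nth_list_update)
  have b: "(Lst sV m j t xs ys)[j := v] = Lst sV m j t (xs[j:=v]) ys" for t v
    using Suc.prems by (auto simp: Lst_def list_eq_iff_nth_eq nth_list_update)
  have c: "(Lst sV m j t xs ys)[j := xs!j] = Lst sV m j t xs ys" for t
    using Suc.prems by (auto simp: Lst_def list_eq_iff_nth_eq nth_list_update)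
  have lin: "Vector_Spaces.linear sV sW (\<lambda>y. f ((Lst sV m j t xs ys)[j := y]))" for t
    using ml jm unfolding multilinear_def by (simp add: Lst_def)
  have e: "f (Lst sV m (Suc j) t xs ys) = f (Lst sV m j t xs ys) + sW t (f (Lst sV m j t (xs[j := ys!j]) ys))" for t
  proof -
    have LL: "(\<forall>x y. f ((Lst sV m j t xs ys)[j := x + y]) = f ((Lst sV m j t xs ys)[j := x]) + f ((Lst sV m j t xs ys)[j := y])) \<and>
      (\<forall>c x. f ((Lst sV m j t xs ys)[j := sV c x]) = sW c (f ((Lst sV m j t xs ys)[j := x])))"
      using lin[of t] unfolding Vector_Spaces.linear_iff by simp
    then have "f ((Lst sV m j t xs ys)[j := xs!j + sV t (ys!j)]) = f ((Lst sV m j t xs ys)[j := xs!j]) + sW t (f ((Lst sV m j t xs ys)[j := ys!j]))"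
      by simp
    then show ?thesis unfolding a c b[symmetric] .
  qed
  have p1: "polyish sW (\<lambda>t. f (Lst sV m j t xs ys))" using Suc by simp
  have p2: "polyish sW (\<lambda>t. f (Lst sV m j t (xs[j := ys!j]) ys))" using Suc by simp
  show ?case unfolding e by (rule polyish_add[OF p1 polyish_scale[OF p2]])
qed

lemma Lst_line: "Lst sV m m t (replicate m y) (replicate m d) = replicate m (y + sV t d)"
  by (simp add: Lst_def list_eq_iff_nth_eq)

lemma finite_zeros:
  assumes vs: "vector_space sW" and ml: "multilinear sV sW m f"
    and nz: "diag m f (y + sV t0 d) \<noteq> 0"
  shows "finite {t. diag m f (y + sV t d) = 0}"
proof -
  have h: "diag m f (y + sV t d) = f (Lst sV m m t (replicate m y) (replicate m d))" for t
    by (simp add: diag_def Lst_line)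
  have P: "polyish sW (\<lambda>t. diag m f (y + sV t d))"
    unfolding h by (rule Lst_expand[OF ml]) auto
  obtain phi where phi: "linfun sW phi" "phi (diag m f (y + sV t0 d)) \<noteq> 0"
    using exists_linfun[OF vs nz] by blast
  obtain p where p: "\<And>t. phi (diag m f (y + sV t d)) = poly p t"
    using P phi(1) unfolding polyish_def by blast
  have p0: "p \<noteq> 0" using phi(2) p[of t0] by auto
  have phi0: "phi 0 = 0"
    using phi(1) unfolding linfun_def by (metis add_cancel_right_right add_0)
  have "{t. diag m f (y + sV t d) = 0} \<subseteq> {t. poly p t = 0}"
    using p phi0 by auto (metis p)
  then show ?thesis using poly_roots_finite[OF p0] finite_subset by blast
qed

theorem lemma3p10:
  fixes sV :: "'f::field \<Rightarrow> 'v::ab_group_add \<Rightarrow> 'v"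
    and sW :: "'f \<Rightarrow> 'w::ab_group_add \<Rightarrow> 'w"
    and n :: nat and m :: "nat \<Rightarrow> nat" and f :: "nat \<Rightarrow> 'v list \<Rightarrow> 'w"
  assumes "infinite (UNIV :: 'f set)"
    and "vector_space sV" and "vector_space sW"
    and "n \<ge> 1"
    and "\<forall>i\<in>{1..n}. m i \<ge> 1"
    and "\<forall>i\<in>{1..n}. multilinear sV sW (m i) (f i)"
    and "\<forall>x. \<exists>i\<in>{1..n}. diag (m i) (f i) x = 0"
  shows "\<exists>i\<in>{1..n}. \<forall>x. diag (m i) (f i) x = 0"
proof (rule ccontr)
  assume "\<not> ?thesis"
  then have ex: "\<forall>i\<in>{1..n}. \<exists>x. diag (m i) (f i) x \<noteq> 0" by blast
  interpret V: vector_space sV by fact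
  have "k \<le> n \<Longrightarrow> \<exists>y. \<forall>i\<in>{1..k}. diag (m i) (f i) y \<noteq> 0" for k
  proof (induction k)
    case 0
    then show ?case by simp
  next
    case (Suc k)
    then obtain y where y: "\<forall>i\<in>{1..k}. diag (m i) (f i) y \<noteq> 0" by auto
    have "Suc k \<in> {1..n}" using Suc.prems by simp
    then obtain x where x: "diag (m (Suc k)) (f (Suc k)) x \<noteq> 0" using ex by blast
    define d where "d = x - y"
    have fin: "finite {t. diag (m i) (f i) (y + sV t d) = 0}" if i: "i \<in> {1..Suc k}" for i
    proof (cases "i = Suc k")
      case True
      have "y + sV 1 d = x" by (simp add: d_def)
      then show ?thesis using finite_zeros[OF assms(3), of sV "m i" "f i" y 1 d] x True assms(6) Suc.prems
        by auto
    next
      case False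
      then have "i \<in> {1..k}" using i by auto
      moreover have "y + sV 0 d = y" by simp
      ultimately show ?thesis using finite_zeros[OF assms(3), of sV "m i" "f i" y 0 d] y assms(6) Suc.prems
        by auto
    qed
    have "finite (\<Union>i\<in>{1..Suc k}. {t. diag (m i) (f i) (y + sV t d) = 0})"
      using fin by blast
    then obtain t where "t \<notin> (\<Union>i\<in>{1..Suc k}. {t. diag (m i) (f i) (y + sV t d) = 0})"
      using ex_new_if_finite[OF assms(1)] by blast
    then show ?case by blast
  qed
  from this[of n] obtain y where "\<forall>i\<in>{1..n}. diag (m i) (f i) y \<noteq> 0" by auto
  then show False using assms(7) by blast
qed

end
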